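(* Let $(E,\tau)$ be a locally solid vector lattice, where $\tau$ is a Fatou topology. Suppose that the carrier $C_\tau$ has a countable order basis. Then $C_\tau=E$.
   Context: All vector lattices are real and Archimedean; linear topologies are Hausdorff. A locally solid topology on a vector lattice is a linear topology such that zero has a neighbourhood basis of solid sets. A subset is order closed if it contains the order limits of nets in it (a net $x_\alpha$ order converges to $x$ if there is a net $y_\beta\downarrow0$ such that for each $\beta_0$ eventually $|x_\alpha-x|\leq y_{\beta_0}$). A Fatou topology is a locally solid topology in which zero has a neighbourhood basis of order closed solid sets. A sequence $(V_n)$ of neighbourhoods of zero is normal if $V_{n+1}+V_{n+1}\subseteq V_n$; the carrier $C_\tau$ is the union of the disjoint complements $N^{\mathrm d}$ (in $E$) where $N=\bigcap_n V_n$ ranges over intersections of normal sequences of solid $\tau$-neighbourhoods of zero. A non-empty subset $A$ of a vector lattice $G$ is an order basis of $G$ if $A^{\mathrm d}=\{0\}$ in $G$. *)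

theory Defs
  imports "HOL-Analysis.Analysis"
begin

definition vl_abs :: "'a::{ordered_real_vector,lattice} \<Rightarrow> 'a" where
  "vl_abs x = sup x (- x)"

definition archimedean_vl :: "'a::{ordered_real_vector,lattice} itself \<Rightarrow> bool" where
  "archimedean_vl _ \<longleftrightarrow>
     (\<forall>x y :: 'a. 0 \<le> x \<and> (\<forall>n::nat. real n *\<^sub>R x \<le> y) \<longrightarrow> x = 0)"

definition solid :: "'a::{ordered_real_vector,lattice} set \<Rightarrow> bool" where
  "solid S \<longleftrightarrow> (\<forall>x y. y \<in> S \<and> vl_abs x \<le> vl_abs y \<longrightarrow> x \<in> S)"

definition linear_topology :: "'a::{ordered_real_vector,lattice} topology \<Rightarrow> bool" where
  "linear_topology \<tau> \<longleftrightarrow>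
     topspace \<tau> = UNIV \<and> Hausdorff_space \<tau> \<and>
     continuous_map (prod_topology \<tau> \<tau>) \<tau> (\<lambda>(x, y). x + y) \<and>
     continuous_map (prod_topology euclideanreal \<tau>) \<tau> (\<lambda>(c, x). c *\<^sub>R x)"

definition nhd0 :: "'a::{ordered_real_vector,lattice} topology \<Rightarrow> 'a set \<Rightarrow> bool" where
  "nhd0 \<tau> U \<longleftrightarrow> (\<exists>V. openin \<tau> V \<and> 0 \<in> V \<and> V \<subseteq> U)"

definition locally_solid :: "'a::{ordered_real_vector,lattice} topology \<Rightarrow> bool" where
  "locally_solid \<tau> \<longleftrightarrow> linear_topology \<tau> \<and>
     (\<forall>U. nhd0 \<tau> U \<longrightarrow> (\<exists>S. nhd0 \<tau> S \<and> solid S \<and> S \<subseteq> U))"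

text \<open>Nets are represented by (proper) filters, as usual in Isabelle:
  a net \<open>x\<^sub>\<alpha>\<close> corresponds to its eventuality filter.  A net \<open>y\<^sub>\<beta> \<down> 0\<close> is represented by
  its range \<open>D\<close>, a nonempty downward directed set with infimum 0.\<close>
definition dec_to_zero :: "'a::{ordered_real_vector,lattice} set \<Rightarrow> bool" where
  "dec_to_zero D \<longleftrightarrow> D \<noteq> {} \<and>
     (\<forall>a\<in>D. \<forall>b\<in>D. \<exists>c\<in>D. c \<le> a \<and> c \<le> b) \<and>
     (\<forall>d\<in>D. 0 \<le> d) \<and> (\<forall>z. (\<forall>d\<in>D. z \<le> d) \<longrightarrow> z \<le> 0)"

definition order_converges :: "'a filter \<Rightarrow> 'a::{ordered_real_vector,lattice} \<Rightarrow> bool" where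
  "order_converges F x \<longleftrightarrow>
     (\<exists>D. dec_to_zero D \<and> (\<forall>d\<in>D. eventually (\<lambda>z. vl_abs (z - x) \<le> d) F))"

definition order_closed :: "'a::{ordered_real_vector,lattice} set \<Rightarrow> bool" where
  "order_closed A \<longleftrightarrow>
     (\<forall>F x. F \<noteq> bot \<and> eventually (\<lambda>z. z \<in> A) F \<and> order_converges F x \<longrightarrow> x \<in> A)"

definition fatou_topology :: "'a::{ordered_real_vector,lattice} topology \<Rightarrow> bool" where
  "fatou_topology \<tau> \<longleftrightarrow> locally_solid \<tau> \<and>
     (\<forall>U. nhd0 \<tau> U \<longrightarrow> (\<exists>S. nhd0 \<tau> S \<and> solid S \<and> order_closed S \<and> S \<subseteq> U))"

definition disj_compl :: "'a::{ordered_real_vector,lattice} set \<Rightarrow> 'a set" where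
  "disj_compl N = {x. \<forall>y\<in>N. inf (vl_abs x) (vl_abs y) = 0}"

definition normal_solid_seq :: "'a::{ordered_real_vector,lattice} topology \<Rightarrow> (nat \<Rightarrow> 'a set) \<Rightarrow> bool" where
  "normal_solid_seq \<tau> V \<longleftrightarrow>
     (\<forall>n. nhd0 \<tau> (V n) \<and> solid (V n) \<and>
          {a + b | a b. a \<in> V (Suc n) \<and> b \<in> V (Suc n)} \<subseteq> V n)"

definition carrier_top :: "'a::{ordered_real_vector,lattice} topology \<Rightarrow> 'a set" where
  "carrier_top \<tau> = \<Union>{disj_compl (\<Inter>n. V n) | V. normal_solid_seq \<tau> V}"

definition order_basis :: "'a::{ordered_real_vector,lattice} set \<Rightarrow> 'a set \<Rightarrow> bool" where
  "order_basis G A \<longleftrightarrow> A \<noteq> {} \<and> A \<subseteq> G \<and> G \<inter> disj_compl A = {0}"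

end

theory Submission
  imports Defs
begin


lemma vl_abs_nonneg_id: fixes x :: "'a::{ordered_real_vector,lattice}"
  assumes "0 \<le> x" shows "vl_abs x = x"
  unfolding vl_abs_def using assms by (metis neg_le_0_iff_le order_trans sup_absorb1)

lemma vl_abs_ge0: fixes x :: "'a::{ordered_real_vector,lattice}" shows "0 \<le> vl_abs x"
proof -
  let ?s = "vl_abs x"
  have "x \<le> ?s" "-x \<le> ?s" unfolding vl_abs_def by simp_all
  hence "x + -x \<le> ?s + ?s" by (rule add_mono)
  hence "0 \<le> ?s + ?s" by simp
  hence "0 \<le> (1/2::real) *\<^sub>R (?s + ?s)" by (rule scaleR_nonneg_nonneg[rotated]) simp
  also have "(1/2::real) *\<^sub>R (?s + ?s) = ?s"
    by (metis scaleR_2 scaleR_scaleR scaleR_one divide_self_if zero_neq_numeral times_divide_eq_left mult_1)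
  finally show ?thesis .
qed

lemma vl_abs_abs: "vl_abs (vl_abs (x::'a::{ordered_real_vector,lattice})) = vl_abs x"
  by (simp add: vl_abs_ge0 vl_abs_nonneg_id)

lemma vl_abs_zero: "vl_abs (0::'a::{ordered_real_vector,lattice}) = 0"
  by (simp add: vl_abs_def)

lemma disj_compl_solid: "solid (disj_compl (N::'a::{ordered_real_vector,lattice} set))"
  unfolding solid_def disj_compl_def
proof (clarsimp)
  fix x y :: 'a assume h: "\<forall>z\<in>N. inf (vl_abs y) (vl_abs z) = 0" "vl_abs x \<le> vl_abs y"
  fix z assume "z \<in> N"
  have "inf (vl_abs x) (vl_abs z) \<le> inf (vl_abs y) (vl_abs z)" using h(2) by (rule inf_mono) simp
  moreover have "0 \<le> inf (vl_abs x) (vl_abs z)" by (simp add: vl_abs_ge0)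
  ultimately show "inf (vl_abs x) (vl_abs z) = 0" using h(1) \<open>z \<in> N\<close> by (metis order_antisym)
qed

lemma disj_compl_antimono: "M \<subseteq> N \<Longrightarrow> disj_compl N \<subseteq> disj_compl M"
  unfolding disj_compl_def by auto

lemma band_lemma:
  fixes B :: "'a::{ordered_real_vector,lattice} set"
  assumes arch: "archimedean_vl TYPE('a)"
    and sB: "solid B" and zB: "0 \<in> B" and aB: "\<And>a b. a \<in> B \<Longrightarrow> b \<in> B \<Longrightarrow> a + b \<in> B"
    and oc: "order_closed B" and u0: "0 \<le> u" and udd: "u \<in> disj_compl (disj_compl B)"
  shows "u \<in> B"
proof -
  define D where "D = {v \<in> B. 0 \<le> v \<and> v \<le> u}"
  have solidD: "x \<in> B" if "y \<in> B" "vl_abs x \<le> vl_abs y" for x y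
    using sB that unfolding solid_def by blast
  have zD: "0 \<in> D" using zB u0 by (simp add: D_def)
  have supD: "sup a b \<in> D" if "a \<in> D" "b \<in> D" for a b
  proof -
    have a: "a \<in> B" "0 \<le> a" "a \<le> u" and b: "b \<in> B" "0 \<le> b" "b \<le> u" using that by (auto simp: D_def)
    have "sup a b \<le> a + b" using a b by (simp add: add_increasing add_increasing2)
    moreover have "0 \<le> sup a b" using a by (simp add: le_supI1)
    ultimately have "vl_abs (sup a b) \<le> vl_abs (a + b)" using a b
      by (simp add: vl_abs_nonneg_id)
    hence "sup a b \<in> B" using aB[OF a(1) b(1)] solidD by blast
    thus ?thesis using a b \<open>0 \<le> sup a b\<close> by (simp add: D_def)
  qed
  have upper: "u \<le> w" if wD: "\<forall>v\<in>D. v \<le> w" for w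
  proof -
    have w0: "0 \<le> w" using wD zD by blast
    define w' where "w' = inf w u"
    have w'0: "0 \<le> w'" using w0 u0 by (simp add: w'_def)
    define e where "e = u - w'"
    have e0: "0 \<le> e" by (simp add: e_def w'_def)
    have eu: "e \<le> u" using w'0 by (simp add: e_def)
    have edisj: "inf e (vl_abs b) = 0" if "b \<in> B" for b
    proof -
      define v where "v = inf e (vl_abs b)"
      have v0: "0 \<le> v" using e0 by (simp add: v_def vl_abs_ge0)
      have vB: "v \<in> B"
      proof -
        have "vl_abs v \<le> vl_abs b" using v0 by (simp add: v_def vl_abs_nonneg_id)
        thus ?thesis using solidD that by blast
      qed
      have nvB: "real n *\<^sub>R v \<in> B" for n
        by (induction n) (simp_all add: zB aB vB scaleR_left_distrib)
      have nv: "real n *\<^sub>R v \<le> w'" for n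
      proof (induction n)
        case 0 then show ?case using w'0 by simp
      next
        case (Suc n)
        have eq: "real (Suc n) *\<^sub>R v = real n *\<^sub>R v + v" by (simp add: scaleR_left_distrib)
        have "real n *\<^sub>R v + v \<le> w' + e" using Suc.IH by (rule add_mono) (simp add: v_def)
        hence le: "real (Suc n) *\<^sub>R v \<le> u" using eq by (simp add: e_def)
        have "0 \<le> real (Suc n) *\<^sub>R v" using v0 by (simp add: scaleR_nonneg_nonneg)
        hence "real (Suc n) *\<^sub>R v \<in> D" unfolding D_def using le nvB[of "Suc n"] by blast
        hence "real (Suc n) *\<^sub>R v \<le> w" using wD by blast
        thus ?case using le by (simp add: w'_def)
      qed
      have "\<forall>n. real n *\<^sub>R v \<le> w'" using nv by blast
      thus ?thesis using arch v0 unfolding archimedean_vl_def v_def by blast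
    qed
    have "e \<in> disj_compl B" unfolding disj_compl_def using edisj e0
      by (simp add: vl_abs_nonneg_id)
    hence "inf (vl_abs u) (vl_abs e) = 0" using udd unfolding disj_compl_def by blast
    hence "inf u e = 0" using u0 e0 by (simp add: vl_abs_nonneg_id)
    hence "e = 0" using eu by (simp add: inf_absorb2)
    hence "u = w'" by (simp add: e_def)
    thus ?thesis unfolding w'_def by (metis inf.cobounded1)
  qed
  define F where "F = (INF v\<in>D. principal {x\<in>D. v \<le> x})"
  have evF: "eventually P F \<longleftrightarrow> (\<exists>v\<in>D. eventually P (principal {x\<in>D. v \<le> x}))" for P
    unfolding F_def
  proof (rule eventually_INF_base)
    show "D \<noteq> {}" using zD by blast
    fix a b assume "a \<in> D" "b \<in> D"
    thus "\<exists>x\<in>D. principal {xa \<in> D. x \<le> xa} \<le> inf (principal {x \<in> D. a \<le> x}) (principal {x \<in> D. b \<le> x})"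
      by (intro bexI[of _ "sup a b"]) (auto simp: supD)
  qed
  have Fnb: "F \<noteq> bot"
  proof
    assume "F = bot"
    hence "eventually (\<lambda>x. False) F" by simp
    then obtain v where "v \<in> D" "eventually (\<lambda>x. False) (principal {x\<in>D. v \<le> x})" using evF by blast
    thus False by (auto simp: eventually_principal)
  qed
  have FB: "eventually (\<lambda>z. z \<in> B) F"
    using evF zD by (auto simp: eventually_principal D_def intro!: bexI[of _ 0])
  have conv: "order_converges F u"
    unfolding order_converges_def
  proof (intro exI conjI)
    let ?D' = "(\<lambda>v. u - v) ` D"
    show "dec_to_zero ?D'"
      unfolding dec_to_zero_def
    proof (intro conjI ballI allI impI)
      show "?D' \<noteq> {}" using zD by blast
    next
      fix a b assume "a \<in> ?D'" "b \<in> ?D'"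
      then obtain a' b' where "a' \<in> D" "b' \<in> D" "a = u - a'" "b = u - b'" by blast
      thus "\<exists>c\<in>?D'. c \<le> a \<and> c \<le> b"
        by (intro bexI[of _ "u - sup a' b'"]) (auto simp: supD diff_left_mono)
    next
      fix d assume "d \<in> ?D'" thus "0 \<le> d" by (auto simp: D_def)
    next
      fix z assume h: "\<forall>d\<in>?D'. z \<le> d"
      have "\<forall>v\<in>D. v \<le> u - z" using h by (auto simp: le_diff_eq add.commute)
      hence "u \<le> u - z" by (rule upper)
      thus "z \<le> 0" by (simp add: le_diff_eq)
    qed
    show "\<forall>d\<in>?D'. eventually (\<lambda>z. vl_abs (z - u) \<le> d) F"
    proof
      fix d assume "d \<in> ?D'"
      then obtain v where v: "v \<in> D" "d = u - v" by blast
      have "\<forall>z\<in>{x\<in>D. v \<le> x}. vl_abs (z - u) \<le> d"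
      proof
        fix z assume z: "z \<in> {x\<in>D. v \<le> x}"
        hence "z \<le> u" by (simp add: D_def)
        have "vl_abs (z - u) = u - z"
        proof -
          have "z - u \<le> 0" "0 \<le> u - z" using \<open>z \<le> u\<close> by simp_all
          hence "z - u \<le> u - z" by (rule order_trans)
          thus ?thesis unfolding vl_abs_def by (simp add: sup_absorb2)
        qed
        thus "vl_abs (z - u) \<le> d" using z v by (simp add: diff_left_mono)
      qed
      thus "eventually (\<lambda>z. vl_abs (z - u) \<le> d) F"
        using evF v(1) by (auto simp: eventually_principal)
    qed
  qed
  show ?thesis using oc Fnb FB conv unfolding order_closed_def by blast
qed



lemma nhd0_Int: "nhd0 \<tau> A \<Longrightarrow> nhd0 \<tau> B \<Longrightarrow> nhd0 \<tau> (A \<inter> B)"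
  unfolding nhd0_def by (meson Int_iff Int_mono openin_Int)

lemma nhd0_zero: "nhd0 \<tau> A \<Longrightarrow> 0 \<in> A"
  unfolding nhd0_def by blast

lemma nhd0_half:
  fixes \<tau> :: "'a::{ordered_real_vector,lattice} topology"
  assumes lt: "linear_topology \<tau>" and Z: "nhd0 \<tau> Z"
  shows "\<exists>Z'. nhd0 \<tau> Z' \<and> (\<forall>a\<in>Z'. \<forall>b\<in>Z'. a + b \<in> Z)"
proof -
  obtain O1 where O1: "openin \<tau> O1" "0 \<in> O1" "O1 \<subseteq> Z" using Z unfolding nhd0_def by blast
  have top: "topspace \<tau> = UNIV" and cm: "continuous_map (prod_topology \<tau> \<tau>) \<tau> (\<lambda>(x, y). x + y)"
    using lt unfolding linear_topology_def by auto
  define S where "S = {p \<in> topspace (prod_topology \<tau> \<tau>). (\<lambda>(x, y). x + y) p \<in> O1}"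
  have So: "openin (prod_topology \<tau> \<tau>) S"
    using cm O1(1) unfolding continuous_map_def S_def by blast
  have S0: "(0, 0) \<in> S"
    using O1(2) top by (simp add: S_def)
  have "\<forall>x y. (x,y) \<in> S \<longrightarrow> (\<exists>U V. openin \<tau> U \<and> openin \<tau> V \<and> x \<in> U \<and> y \<in> V \<and> U \<times> V \<subseteq> S)"
    using So by (simp only: openin_prod_topology_alt)
  hence "\<exists>U V. openin \<tau> U \<and> openin \<tau> V \<and> 0 \<in> U \<and> 0 \<in> V \<and> U \<times> V \<subseteq> S"
    using S0 by blast
  then obtain U V where UV: "openin \<tau> U" "openin \<tau> V" "0 \<in> U" "0 \<in> V" "U \<times> V \<subseteq> S"
    by blast
  show ?thesis
  proof (intro exI conjI ballI)
    show "nhd0 \<tau> (U \<inter> V)" unfolding nhd0_def using UV by (intro exI[of _ "U \<inter> V"]) auto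
    fix a b assume "a \<in> U \<inter> V" "b \<in> U \<inter> V"
    hence "(a, b) \<in> S" using UV(5) by auto
    thus "a + b \<in> Z" using O1(3) by (auto simp: S_def)
  qed
qed

lemma fatou_refine:
  fixes \<tau> :: "'a::{ordered_real_vector,lattice} topology" and W :: "nat \<Rightarrow> 'a set"
  assumes ft: "fatou_topology \<tau>" and W: "\<And>k. nhd0 \<tau> (W k)"
  shows "\<exists>U. normal_solid_seq \<tau> U \<and> (\<forall>k. order_closed (U k)) \<and> (\<forall>k. U k \<subseteq> W k)"
proof -
  have lt: "linear_topology \<tau>" using ft unfolding fatou_topology_def locally_solid_def by (simp only:)
  have fz: "\<forall>U. nhd0 \<tau> U \<longrightarrow> (\<exists>S. nhd0 \<tau> S \<and> solid S \<and> order_closed S \<and> S \<subseteq> U)"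
    using ft unfolding fatou_topology_def by (rule conjunct2)
  have "\<forall>Z. \<exists>S. nhd0 \<tau> Z \<longrightarrow> nhd0 \<tau> S \<and> solid S \<and> order_closed S \<and> S \<subseteq> Z"
  proof
    fix Z show "\<exists>S. nhd0 \<tau> Z \<longrightarrow> nhd0 \<tau> S \<and> solid S \<and> order_closed S \<and> S \<subseteq> Z"
    proof (cases "nhd0 \<tau> Z")
      case True then show ?thesis using fz by blast
    qed simp
  qed
  then obtain g where g0: "\<forall>Z. nhd0 \<tau> Z \<longrightarrow> nhd0 \<tau> (g Z) \<and> solid (g Z) \<and> order_closed (g Z) \<and> g Z \<subseteq> Z"
    by (rule choice[THEN exE])
  have g: "nhd0 \<tau> (g Z) \<and> solid (g Z) \<and> order_closed (g Z) \<and> g Z \<subseteq> Z" if "nhd0 \<tau> Z" for Z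
    by (rule mp[OF spec[OF g0] that])
  have "\<forall>Z. \<exists>Z'. nhd0 \<tau> Z \<longrightarrow> nhd0 \<tau> Z' \<and> (\<forall>a\<in>Z'. \<forall>b\<in>Z'. a + b \<in> Z)"
  proof
    fix Z show "\<exists>Z'. nhd0 \<tau> Z \<longrightarrow> nhd0 \<tau> Z' \<and> (\<forall>a\<in>Z'. \<forall>b\<in>Z'. a + b \<in> Z)"
    proof (cases "nhd0 \<tau> Z")
      case True then show ?thesis using nhd0_half[OF lt True] by blast
    qed simp
  qed
  then obtain h where h0: "\<forall>Z. nhd0 \<tau> Z \<longrightarrow> nhd0 \<tau> (h Z) \<and> (\<forall>a\<in>h Z. \<forall>b\<in>h Z. a + b \<in> Z)"
    by (rule choice[THEN exE])
  have h: "nhd0 \<tau> (h Z) \<and> (\<forall>a\<in>h Z. \<forall>b\<in>h Z. a + b \<in> Z)" if "nhd0 \<tau> Z" for Z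
    by (rule mp[OF spec[OF h0] that])
  define U where "U = rec_nat (g (W 0)) (\<lambda>k S. g (W (Suc k) \<inter> h S))"
  have U0: "U 0 = g (W 0)" and US: "U (Suc k) = g (W (Suc k) \<inter> h (U k))" for k
    by (simp_all add: U_def)
  have P: "nhd0 \<tau> (U k) \<and> solid (U k) \<and> order_closed (U k) \<and> U k \<subseteq> W k" for k
  proof (induction k)
    case 0 then show ?case using g[OF W[of 0]] U0 by simp
  next
    case (Suc k)
    have "nhd0 \<tau> (h (U k))" using h Suc by blast
    hence "nhd0 \<tau> (W (Suc k) \<inter> h (U k))" using W by (simp add: nhd0_Int)
    from g[OF this] show ?case unfolding US by blast
  qed
  have "normal_solid_seq \<tau> U"
    unfolding normal_solid_seq_def
  proof (intro allI conjI)
    fix n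
    show "nhd0 \<tau> (U n)" "solid (U n)" using P[of n] by simp_all
    have hn: "nhd0 \<tau> (h (U n))" using h P by blast
    hence "nhd0 \<tau> (W (Suc n) \<inter> h (U n))" using W by (simp add: nhd0_Int)
    from g[OF this] have "U (Suc n) \<subseteq> h (U n)" unfolding US by blast
    moreover have "\<forall>a\<in>h (U n). \<forall>b\<in>h (U n). a + b \<in> U n" using h P by blast
    ultimately show "{a + b |a b. a \<in> U (Suc n) \<and> b \<in> U (Suc n)} \<subseteq> U n" by blast
  qed
  thus ?thesis using P by blast
qed

lemma normal_facts:
  assumes "normal_solid_seq \<tau> V"
  shows "nhd0 \<tau> (V n)" "solid (V n)" "{a + b |a b. a \<in> V (Suc n) \<and> b \<in> V (Suc n)} \<subseteq> V n"
  using assms unfolding normal_solid_seq_def by simp_all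

lemma normal_add:
  assumes "normal_solid_seq \<tau> V" "a \<in> V (Suc n)" "b \<in> V (Suc n)"
  shows "a + b \<in> V n"
proof -
  have "a + b \<in> {a + b |a b. a \<in> V (Suc n) \<and> b \<in> V (Suc n)}" using assms(2,3) by blast
  thus ?thesis using normal_facts(3)[OF assms(1)] by (rule subsetD[rotated])
qed

lemma normal_decr:
  assumes "normal_solid_seq \<tau> V" "k \<le> m"
  shows "V m \<subseteq> (V k :: 'a::{ordered_real_vector,lattice} set)"
proof -
  have step: "V (Suc n) \<subseteq> V n" for n
  proof
    fix x assume x: "x \<in> V (Suc n)"
    have "0 \<in> V (Suc n)" by (rule nhd0_zero[OF normal_facts(1)[OF assms(1)]])
    hence "x + 0 \<in> V n" by (rule normal_add[OF assms(1) x])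
    thus "x \<in> V n" by simp
  qed
  show ?thesis by (rule lift_Suc_antimono_le[of V, OF step assms(2)])
qed

lemma nhd0_INT_atMost:
  fixes V :: "nat \<Rightarrow> 'a::{ordered_real_vector,lattice} set"
  assumes "\<And>n. n \<le> k \<Longrightarrow> nhd0 \<tau> (V n)"
  shows "nhd0 \<tau> (\<Inter>n\<in>{..k}. V n)"
  using assms
proof (induction k)
  case 0 then show ?case by simp
next
  case (Suc k)
  have "(\<Inter>n\<in>{..Suc k}. V n) = V (Suc k) \<inter> (\<Inter>n\<in>{..k}. V n)" by (simp add: atMost_Suc)
  then show ?case using Suc by (simp add: nhd0_Int)
qed

lemma seq_props:
  fixes \<tau> :: "'a::{ordered_real_vector,lattice} topology"
  assumes "normal_solid_seq \<tau> U" "\<forall>k. order_closed (U k)"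
  shows "solid (\<Inter>k. U k)" "0 \<in> (\<Inter>k. U k)" "order_closed (\<Inter>k. U k)"
    "\<And>a b. a \<in> (\<Inter>k. U k) \<Longrightarrow> b \<in> (\<Inter>k. U k) \<Longrightarrow> a + b \<in> (\<Inter>k. U k)"
proof -
  show "solid (\<Inter>k. U k)" unfolding solid_def
  proof (intro allI impI)
    fix x y assume h: "y \<in> (\<Inter>k. U k) \<and> vl_abs x \<le> vl_abs y"
    have "x \<in> U k" for k
      using normal_facts(2)[OF assms(1), of k] h unfolding solid_def by blast
    thus "x \<in> (\<Inter>k. U k)" by blast
  qed
  have "0 \<in> U k" for k by (rule nhd0_zero[OF normal_facts(1)[OF assms(1)]])
  thus "0 \<in> (\<Inter>k. U k)" by blast
  show "order_closed (\<Inter>k. U k)" unfolding order_closed_def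
  proof (intro allI impI)
    fix F x assume h: "F \<noteq> bot \<and> eventually (\<lambda>z. z \<in> (\<Inter>k. U k)) F \<and> order_converges F x"
    have "x \<in> U k" for k
    proof -
      have "eventually (\<lambda>z. z \<in> U k) F" using conjunct1[OF conjunct2[OF h]] by (rule eventually_mono) blast
      moreover have "order_closed (U k)" using assms(2) by blast
      ultimately show "x \<in> U k" using h unfolding order_closed_def by blast
    qed
    thus "x \<in> (\<Inter>k. U k)" by blast
  qed
  fix a b assume "a \<in> (\<Inter>k. U k)" "b \<in> (\<Inter>k. U k)"
  hence "a + b \<in> U k" for k using normal_add[OF assms(1)] by blast
  thus "a + b \<in> (\<Inter>k. U k)" by blast
qed

lemma carrier_sub: "normal_solid_seq \<tau> V \<Longrightarrow> disj_compl (\<Inter>n. V n) \<subseteq> carrier_top \<tau>"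
  unfolding carrier_top_def by blast



theorem proposition3p15:
  fixes \<tau> :: "'a::{ordered_real_vector,lattice} topology"
  assumes "archimedean_vl TYPE('a)"
    and "fatou_topology \<tau>"
    and "\<exists>A. countable A \<and> order_basis (carrier_top \<tau>) A"
  shows "carrier_top \<tau> = UNIV"
proof -
  note arch = assms(1) and ft = assms(2)
  obtain A where cA: "countable A" and ob: "order_basis (carrier_top \<tau>) A" using assms(3) by blast
  have Ane: "A \<noteq> {}" and Asub: "A \<subseteq> carrier_top \<tau>" and Adc: "carrier_top \<tau> \<inter> disj_compl A = {0}"
    using ob unfolding order_basis_def by auto
  define f where "f = from_nat_into A"
  have fA: "f n \<in> A" for n using Ane by (simp add: f_def from_nat_into)
  have frange: "\<exists>n. a = f n" if "a \<in> A" for a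
    using that range_from_nat_into[OF Ane cA] unfolding f_def by blast
  have "\<forall>n. \<exists>V. normal_solid_seq \<tau> V \<and> f n \<in> disj_compl (\<Inter>k. V k)"
  proof
    fix n have "f n \<in> carrier_top \<tau>" using fA Asub by blast
    thus "\<exists>V. normal_solid_seq \<tau> V \<and> f n \<in> disj_compl (\<Inter>k. V k)" unfolding carrier_top_def by blast
  qed
  then obtain Vs where Vs0: "\<forall>n. normal_solid_seq \<tau> (Vs n) \<and> f n \<in> disj_compl (\<Inter>k. Vs n k)"
    by (rule choice[THEN exE])
  have Vs1: "normal_solid_seq \<tau> (Vs n)" and Vs2: "f n \<in> disj_compl (\<Inter>k. Vs n k)" for n
    using Vs0 by blast+
  define W1 where "W1 k = (\<Inter>n\<in>{..k}. Vs n k)" for k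
  have "nhd0 \<tau> (W1 k)" for k unfolding W1_def by (rule nhd0_INT_atMost) (rule normal_facts(1)[OF Vs1])
  then obtain U where U: "normal_solid_seq \<tau> U" "\<forall>k. order_closed (U k)" "\<forall>k. U k \<subseteq> W1 k"
    using fatou_refine[OF ft] by blast
  define N where "N = (\<Inter>k. U k)"
  have NV: "N \<subseteq> (\<Inter>k. Vs n k)" for n
  proof
    fix x assume x: "x \<in> N"
    have "x \<in> Vs n k" for k
    proof -
      have "x \<in> U (max k n)" using x by (simp add: N_def)
      also have "U (max k n) \<subseteq> W1 (max k n)" using U(3) by blast
      also have "W1 (max k n) \<subseteq> Vs n (max k n)" unfolding W1_def by auto
      also have "Vs n (max k n) \<subseteq> Vs n k" by (rule normal_decr[OF Vs1]) simp
      finally show ?thesis .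
    qed
    thus "x \<in> (\<Inter>k. Vs n k)" by blast
  qed
  have NA: "N \<subseteq> disj_compl A"
  proof
    fix w assume w: "w \<in> N"
    show "w \<in> disj_compl A" unfolding disj_compl_def
    proof (intro CollectI ballI)
      fix a assume "a \<in> A"
      then obtain n where "a = f n" using frange by blast
      hence "a \<in> disj_compl (\<Inter>k. Vs n k)" using Vs2 by simp
      hence "inf (vl_abs a) (vl_abs w) = 0" using NV w unfolding disj_compl_def by blast
      thus "inf (vl_abs w) (vl_abs a) = 0" by (simp add: inf_commute)
    qed
  qed
  have solN: "solid N" unfolding N_def by (rule seq_props(1)[OF U(1,2)])
  have N0: "N = {0}"
  proof (rule ccontr)
    have "0 \<in> N" using seq_props(2)[OF U(1,2)] by (simp add: N_def)
    assume "N \<noteq> {0}"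
    then obtain y where y: "y \<in> N" "y \<noteq> 0" using \<open>0 \<in> N\<close> by blast
    have lt: "linear_topology \<tau>" using ft unfolding fatou_topology_def locally_solid_def by blast
    hence "Hausdorff_space \<tau>" "topspace \<tau> = UNIV" unfolding linear_topology_def by auto
    then obtain O1 O2 where O: "openin \<tau> O1" "openin \<tau> O2" "0 \<in> O1" "y \<in> O2" "disjnt O1 O2"
      using y(2) unfolding Hausdorff_space_def by (metis UNIV_I)
    have nO: "nhd0 \<tau> O1" unfolding nhd0_def using O by blast
    have "nhd0 \<tau> (U k \<inter> O1)" for k by (rule nhd0_Int[OF normal_facts(1)[OF U(1)] nO])
    from fatou_refine[OF ft, of "\<lambda>k. U k \<inter> O1", OF this] obtain U' where U': "normal_solid_seq \<tau> U'" "\<forall>k. order_closed (U' k)" "\<forall>k. U' k \<subseteq> U k \<inter> O1"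
      by blast
    define N' where "N' = (\<Inter>k. U' k)"
    have yN': "y \<notin> N'"
    proof
      assume "y \<in> N'"
      hence "y \<in> O1" using U'(3) unfolding N'_def by blast
      thus False using O(4,5) unfolding disjnt_def by blast
    qed
    have solN': "solid N'" unfolding N'_def by (rule seq_props(1)[OF U'(1,2)])
    have ayN': "vl_abs y \<notin> N'"
    proof
      assume a: "vl_abs y \<in> N'"
      have "vl_abs y \<le> vl_abs (vl_abs y)" by (simp add: vl_abs_abs)
      hence "y \<in> N'" using solN' a unfolding solid_def by blast
      thus False using yN' by blast
    qed
    have "vl_abs y \<notin> disj_compl (disj_compl N')"
    proof
      assume "vl_abs y \<in> disj_compl (disj_compl N')"
      from band_lemma[OF arch seq_props(1,2)[OF U'(1,2)] seq_props(4)[OF U'(1,2)] seq_props(3)[OF U'(1,2)] vl_abs_ge0 this[unfolded N'_def]]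
      show False using ayN' unfolding N'_def by blast
    qed
    then obtain z where z: "z \<in> disj_compl N'" "inf (vl_abs (vl_abs y)) (vl_abs z) \<noteq> 0"
      unfolding disj_compl_def by blast
    define w where "w = inf (vl_abs y) (vl_abs z)"
    have w0: "0 \<le> w" by (simp add: w_def vl_abs_ge0)
    have wne: "w \<noteq> 0" using z(2) by (simp add: w_def vl_abs_abs)
    have aw: "vl_abs w = w" by (rule vl_abs_nonneg_id[OF w0])
    have "w \<le> vl_abs z" unfolding w_def by simp
    hence "vl_abs w \<le> vl_abs z" using aw by simp
    hence wD: "w \<in> disj_compl N'" using disj_compl_solid z(1) unfolding solid_def by blast
    have wC: "w \<in> carrier_top \<tau>" using carrier_sub[OF U'(1)] wD unfolding N'_def by blast
    have "w \<le> vl_abs y" unfolding w_def by simp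
    hence "vl_abs w \<le> vl_abs y" using aw by simp
    hence "w \<in> N" using solN y(1) unfolding solid_def by blast
    hence "w \<in> disj_compl A" using NA by blast
    hence "w \<in> {0}" using Adc wC by blast
    thus False using wne by simp
  qed
  have "disj_compl N = UNIV" unfolding N0 disj_compl_def
    by (simp add: vl_abs_zero vl_abs_ge0 inf_absorb2)
  thus ?thesis using carrier_sub[OF U(1)] unfolding N_def by blast
qed

end
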